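(* Every cutoff is a rational number.
   Context: For a real number $\alpha\ge 1$, define the integer sequence $(P^\alpha_i)_{i\ge 0}$ by $P^\alpha_0=0$, $P^\alpha_1=1$, and for $k\ge 1$, $P^\alpha_{k+1}=P^\alpha_k+P^\alpha_j$, where $j\ge1$ is the unique index with $\alpha P^\alpha_{j-1}<P^\alpha_k\le \alpha P^\alpha_j$. A cutoff is a real number $\alpha\ge 1$ such that for every real $\beta$ with $1\le\beta<\alpha$, the sequences $(P^\alpha_i)$ and $(P^\beta_i)$ are not identical. *)

theory Defs
  imports Complex_Main
begin

text \<open>For k >= 1, P_(k+1) = P_k + P_j where j >= 1 is the (unique) index with
  a * P_(j-1) < P_k <= a * P_j; only already-defined indices 1 <= j <= k are
  considered (for j > k the terms are not yet defined; and since the sequence is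
  nondecreasing and a >= 1, no j > k could satisfy the condition anyway).\<close>
fun Plist :: "real \<Rightarrow> nat \<Rightarrow> nat list" where
  "Plist a 0 = [0]"
| "Plist a (Suc 0) = [0, 1]"
| "Plist a (Suc (Suc k)) =
     (let xs = Plist a (Suc k);
          pk = xs ! Suc k;
          j = (THE j. 1 \<le> j \<and> j \<le> Suc k \<and>
                     a * real (xs ! (j - 1)) < real pk \<and> real pk \<le> a * real (xs ! j))
      in xs @ [pk + xs ! j])"

definition P :: "real \<Rightarrow> nat \<Rightarrow> nat" where
  "P a n = Plist a n ! n"

definition cutoff :: "real \<Rightarrow> bool" where
  "cutoff a \<longleftrightarrow> 1 \<le> a \<and> (\<forall>b. 1 \<le> b \<and> b < a \<longrightarrow> P a \<noteq> P b)"

end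

theory Submission
  imports Defs
begin

lemma Plist_snoc: "\<exists>x. Plist a (Suc n) = Plist a n @ [x]"
proof (cases n)
  case 0 then show ?thesis by simp
next
  case (Suc m) then show ?thesis by (simp add: Let_def)
qed

lemma Plist_len: "length (Plist a n) = Suc n"
proof (induction n)
  case 0 then show ?case by simp
next
  case (Suc n)
  obtain x where "Plist a (Suc n) = Plist a n @ [x]" using Plist_snoc by blast
  then show ?case using Suc by simp
qed

lemma Plist_nth: "i \<le> n \<Longrightarrow> Plist a n ! i = P a i"
proof (induction n arbitrary: i)
  case 0 then show ?case by (simp add: P_def)
next
  case (Suc n)
  obtain x where x: "Plist a (Suc n) = Plist a n @ [x]" using Plist_snoc by blast
  show ?case
  proof (cases "i \<le> n")
    case True
    then have "Plist a (Suc n) ! i = Plist a n ! i" using x by (simp add: nth_append Plist_len)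
    then show ?thesis using Suc True by simp
  next
    case False
    then have "i = Suc n" using Suc.prems by simp
    then show ?thesis by (simp add: P_def)
  qed
qed

lemma P0: "P a 0 = 0" by (simp add: P_def)
lemma P1: "P a 1 = 1" by (simp add: P_def)

definition J :: "real \<Rightarrow> nat \<Rightarrow> nat" where
  "J a k = (THE j. 1 \<le> j \<and> j \<le> k \<and> a * real (P a (j - 1)) < real (P a k)
              \<and> real (P a k) \<le> a * real (P a j))"

lemma P_mono_step: "P a n \<le> P a (Suc n)"
proof (cases n)
  case 0 then show ?thesis by (simp add: P_def)
next
  case (Suc k)
  have "P a (Suc (Suc k)) \<ge> Plist a (Suc k) ! Suc k"
    by (simp add: P_def Let_def nth_append Plist_len)
  then show ?thesis using Suc by (simp add: P_def)
qed

lemma P_mono: "mono (P a)"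
  by (simp add: P_mono_step mono_iff_le_Suc)

lemma P_pos: "1 \<le> n \<Longrightarrow> 1 \<le> P a n"
  using P_mono[of a] P1[of a] by (metis monoD)

lemma pred_unique:
  fixes p :: "nat \<Rightarrow> nat" and a x :: real
  assumes "mono p" "0 \<le> a"
    and "1 \<le> ju" "a * real (p (ju - 1)) < x" "x \<le> a * real (p ju)"
    and "1 \<le> jw" "a * real (p (jw - 1)) < x" "x \<le> a * real (p jw)"
  shows "ju = jw"
proof (rule ccontr)
  assume ne: "ju \<noteq> jw"
  have *: False if "1 \<le> u" "u < v" "x \<le> a * real (p u)" "a * real (p (v - 1)) < x" for u v
  proof -
    have "p u \<le> p (v - 1)" using that assms(1) by (simp add: monoD)
    then have "a * real (p u) \<le> a * real (p (v - 1))" using assms(2) by (simp add: mult_left_mono)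
    then show False using that by linarith
  qed
  show False
  proof (cases "ju < jw")
    case True then show ?thesis using *[of ju jw] assms by blast
  next
    case False then have "jw < ju" using ne by simp
    then show ?thesis using *[of jw ju] assms by blast
  qed
qed

lemma J_spec:
  assumes a: "1 \<le> a" and k: "1 \<le> k"
  shows "1 \<le> J a k \<and> J a k \<le> k \<and> a * real (P a (J a k - 1)) < real (P a k)
              \<and> real (P a k) \<le> a * real (P a (J a k))"
proof -
  let ?Q = "\<lambda>j. 1 \<le> j \<and> j \<le> k \<and> a * real (P a (j - 1)) < real (P a k)
              \<and> real (P a k) \<le> a * real (P a j)"
  define j0 where "j0 = (LEAST j. real (P a k) \<le> a * real (P a j))"
  have ex: "real (P a k) \<le> a * real (P a k)" using mult_right_mono[OF a, of "real (P a k)"] by simp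
  then have h1: "real (P a k) \<le> a * real (P a j0)" unfolding j0_def by (rule LeastI)
  have h2: "j0 \<le> k" unfolding j0_def using ex by (rule Least_le)
  have pk: "1 \<le> P a k" using P_pos k by blast
  have h3: "j0 \<noteq> 0"
  proof
    assume "j0 = 0" then show False using h1 pk by (simp add: P0)
  qed
  have h4: "\<not> real (P a k) \<le> a * real (P a (j0 - 1))"
  proof -
    have "j0 - 1 < j0" using h3 by simp
    then show ?thesis unfolding j0_def by (rule not_less_Least)
  qed
  have Q0: "?Q j0" using h1 h2 h3 h4 by simp
  have "?Q (THE j. ?Q j)"
  proof (rule theI[of ?Q j0])
    show "?Q j0" by (rule Q0)
    fix j assume "?Q j"
    then show "j = j0" using pred_unique[OF P_mono[of a], where a=a and x="real (P a k)" and ju=j and jw=j0] Q0 a by auto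
  qed
  then show ?thesis unfolding J_def .
qed

lemma P_rec:
  assumes a: "1 \<le> a"
  shows "P a (Suc (Suc k)) = P a (Suc k) + P a (J a (Suc k))"
proof -
  define xs where "xs = Plist a (Suc k)"
  have e: "(\<lambda>j. 1 \<le> j \<and> j \<le> Suc k \<and>
                     a * real (xs ! (j - 1)) < real (xs ! Suc k) \<and> real (xs ! Suc k) \<le> a * real (xs ! j))
       = (\<lambda>j. 1 \<le> j \<and> j \<le> Suc k \<and> a * real (P a (j - 1)) < real (P a (Suc k))
              \<and> real (P a (Suc k)) \<le> a * real (P a j))"
  proof (rule ext)
    fix j show "(1 \<le> j \<and> j \<le> Suc k \<and>
                     a * real (xs ! (j - 1)) < real (xs ! Suc k) \<and> real (xs ! Suc k) \<le> a * real (xs ! j))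
       = (1 \<le> j \<and> j \<le> Suc k \<and> a * real (P a (j - 1)) < real (P a (Suc k))
              \<and> real (P a (Suc k)) \<le> a * real (P a j))"
    proof (cases "j \<le> Suc k")
      case True
      then show ?thesis by (simp add: xs_def Plist_nth)
    qed simp
  qed
  have h: "Plist a (Suc (Suc k)) = xs @ [xs ! Suc k + xs ! (THE j. 1 \<le> j \<and> j \<le> Suc k \<and>
                     a * real (xs ! (j - 1)) < real (xs ! Suc k) \<and> real (xs ! Suc k) \<le> a * real (xs ! j))]"
    unfolding xs_def Plist.simps(3)[of a k] Let_def by (rule refl)
  have "(THE j. 1 \<le> j \<and> j \<le> Suc k \<and>
                     a * real (xs ! (j - 1)) < real (xs ! Suc k) \<and> real (xs ! Suc k) \<le> a * real (xs ! j))
     = J a (Suc k)" unfolding J_def e by (rule refl)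
  then have "Plist a (Suc (Suc k)) = xs @ [xs ! Suc k + xs ! (J a (Suc k))]"
    using h by (simp only:)
  moreover have "J a (Suc k) \<le> Suc k" using J_spec[OF a, of "Suc k"] by simp
  ultimately have "P a (Suc (Suc k)) = xs ! Suc k + xs ! (J a (Suc k))"
    unfolding P_def by (simp add: nth_append Plist_len xs_def)
  then show ?thesis
    using \<open>J a (Suc k) \<le> Suc k\<close> by (simp add: xs_def Plist_nth)
qed

lemma P_rec':
  assumes a: "1 \<le> a" and m: "1 \<le> m"
  shows "P a (Suc m) = P a m + P a (J a m)"
proof -
  obtain k where "m = Suc k" using m by (cases m) auto
  then show ?thesis using P_rec[OF a, of k] by simp
qed

lemma Pmono_le: "i \<le> j \<Longrightarrow> P a i \<le> P a j"
  using P_mono[of a] by (simp add: monoD)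

lemma J_le_Suc:
  assumes a: "1 \<le> a" and k: "1 \<le> k"
  shows "J a (Suc k) \<le> Suc (J a k)"
proof (rule ccontr)
  assume c: "\<not> ?thesis"
  let ?j = "J a k"
  have sk: "1 \<le> ?j" "?j \<le> k" "real (P a k) \<le> a * real (P a ?j)" using J_spec[OF a k] by auto
  have sj: "real (P a ?j) \<le> a * real (P a (J a ?j))" using J_spec[OF a sk(1)] by auto
  have r1: "P a (Suc k) = P a k + P a ?j" using P_rec'[OF a k] .
  have r2: "P a (Suc ?j) = P a ?j + P a (J a ?j)" using P_rec'[OF a sk(1)] .
  have le: "real (P a (Suc k)) \<le> a * real (P a (Suc ?j))"
    using r1 r2 sk(3) sj by (simp add: distrib_left)
  have s1: "a * real (P a (J a (Suc k) - 1)) < real (P a (Suc k))" using J_spec[OF a, of "Suc k"] by auto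
  have "Suc ?j \<le> J a (Suc k) - 1" using c by simp
  then have "P a (Suc ?j) \<le> P a (J a (Suc k) - 1)" by (rule Pmono_le)
  then have "a * real (P a (Suc ?j)) \<le> a * real (P a (J a (Suc k) - 1))" using a by simp
  then show False using le s1 by linarith
qed

lemma D_mono_step:
  assumes a: "1 \<le> a"
  shows "k - J a k \<le> Suc k - J a (Suc k)"
proof (cases "k = 0")
  case True then show ?thesis by simp
next
  case False
  then have k: "1 \<le> k" by simp
  show ?thesis using J_le_Suc[OF a k] J_spec[OF a k] by simp
qed

lemma D_mono:
  assumes a: "1 \<le> a" and "k \<le> k'"
  shows "k - J a k \<le> k' - J a k'"
  using lift_Suc_mono_le[of "\<lambda>k. k - J a k", OF D_mono_step[OF a] assms(2)] .

lemma D_bound: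
  assumes a: "1 \<le> a" and k: "1 \<le> k"
  shows "real (k - J a k) \<le> a * a"
proof -
  let ?j = "J a k"
  have sk: "1 \<le> ?j" "?j \<le> k" "real (P a k) \<le> a * real (P a ?j)" using J_spec[OF a k] by auto
  have grow: "a * real (P a i) \<ge> a * real (P a ?j) + real (i - ?j) * real (P a ?j)"
    if "?j \<le> i" "i \<le> k" for i
    using that
  proof (induction i rule: dec_induct)
    case base then show ?case by simp
  next
    case (step i)
    have i1: "1 \<le> i" using step.hyps sk(1) by simp
    have si: "real (P a i) \<le> a * real (P a (J a i))" using J_spec[OF a i1] by auto
    have "P a ?j \<le> P a i" using step.hyps by (simp add: Pmono_le)
    then have q: "real (P a ?j) \<le> a * real (P a (J a i))" using si by linarith
    have r: "P a (Suc i) = P a i + P a (J a i)" using P_rec'[OF a i1] .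
    have ih: "a * real (P a i) \<ge> a * real (P a ?j) + real (i - ?j) * real (P a ?j)"
      using step by simp
    have "real (Suc i - ?j) = real (i - ?j) + 1" using step.hyps by simp
    then show ?case using r ih q by (simp add: distrib_left distrib_right)
  qed
  have g: "a * real (P a k) \<ge> a * real (P a ?j) + real (k - ?j) * real (P a ?j)"
    using grow[of k] sk by simp
  have "a * real (P a k) \<le> a * (a * real (P a ?j))" using sk(3) a by simp
  then have "real (k - ?j) * real (P a ?j) \<le> (a * a - a) * real (P a ?j)"
    using g by (simp add: algebra_simps)
  moreover have "1 \<le> P a ?j" using P_pos sk(1) by blast
  then have "0 < real (P a ?j)" by simp
  ultimately have "real (k - ?j) \<le> a * a - a" by simp
  then show ?thesis using a by simp
qed

lemma regime:
  assumes a: "1 \<le> a"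
  shows "\<exists>K0\<ge>1. \<forall>k\<ge>K0. J a (Suc k) = Suc (J a k)"
proof -
  define D where "D = (\<lambda>k. k - J a k)"
  define B where "B = nat \<lceil>a * a\<rceil>"
  have DB: "D k \<le> B" for k
  proof (cases "k = 0")
    case True then show ?thesis by (simp add: D_def)
  next
    case False
    then have "real (D k) \<le> a * a" using D_bound[OF a, of k] by (simp add: D_def)
    then show ?thesis unfolding B_def by linarith
  qed
  have sub: "range D \<subseteq> {..B}" using DB by blast
  have fin: "finite (range D)" using finite_subset[OF sub] by simp
  define M where "M = Max (range D)"
  have "M \<in> range D" unfolding M_def using fin by (intro Max_in) auto
  then obtain K where K: "D K = M" by auto
  have le: "D k \<le> M" for k unfolding M_def using fin by (intro Max_ge) auto
  have eq: "D k = M" if "Suc K \<le> k" for k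
    using le[of k] D_mono[OF a, of K k] that K by (simp add: D_def)
  have "\<forall>k\<ge>Suc K. J a (Suc k) = Suc (J a k)"
  proof (intro allI impI)
    fix k assume k: "Suc K \<le> k"
    have k1: "1 \<le> k" using k by simp
    have "D (Suc k) = D k" using eq[of k] eq[of "Suc k"] k by simp
    moreover have "J a k \<le> k" using J_spec[OF a k1] by blast
    moreover have "J a (Suc k) \<le> Suc k" using J_spec[OF a, of "Suc k"] by simp
    ultimately show "J a (Suc k) = Suc (J a k)" unfolding D_def by arith
  qed
  then show ?thesis by (intro exI[of _ "Suc K"]) simp
qed

definition gap :: "real \<Rightarrow> nat \<Rightarrow> real" where
  "gap a k = a * real (P a (J a k)) - real (P a k)"

lemma gap_rec:
  assumes a: "1 \<le> a" and k: "1 \<le> k" and r: "J a (Suc k) = Suc (J a k)"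
  shows "gap a (Suc k) = gap a k + gap a (J a k)"
proof -
  have j1: "1 \<le> J a k" using J_spec[OF a k] by simp
  have r1: "P a (Suc k) = P a k + P a (J a k)" using P_rec'[OF a k] .
  have r2: "P a (Suc (J a k)) = P a (J a k) + P a (J a (J a k))" using P_rec'[OF a j1] .
  show ?thesis unfolding gap_def r r1 r2 by (simp add: algebra_simps)
qed

lemma gap_pos:
  assumes a: "1 \<le> a" and k: "1 \<le> k" and irr: "a \<notin> \<rat>"
  shows "0 < gap a k"
proof -
  have s: "real (P a k) \<le> a * real (P a (J a k))" "1 \<le> J a k" using J_spec[OF a k] by auto
  have p: "1 \<le> P a (J a k)" using P_pos s(2) by blast
  have "gap a k \<noteq> 0"
  proof
    assume "gap a k = 0"
    then have "a * real (P a (J a k)) = real (P a k)" unfolding gap_def by simp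
    then have "a = real (P a k) / real (P a (J a k))" using p by (simp add: field_simps)
    moreover have "real (P a k) / real (P a (J a k)) \<in> \<rat>" by (intro Rats_divide Rats_of_nat)
    ultimately have "a \<in> \<rat>" by simp
    then show False using irr by simp
  qed
  then show ?thesis using s(1) unfolding gap_def by simp
qed

lemma gap_lower:
  assumes a: "1 \<le> a" and irr: "a \<notin> \<rat>"
  shows "\<exists>c>0. \<forall>k\<ge>1. c * real (P a (J a k)) \<le> gap a k"
proof -
  obtain K0 where K0: "K0 \<ge> 1" "\<forall>k\<ge>K0. J a (Suc k) = Suc (J a k)" using regime[OF a] by blast
  define S where "S = (\<lambda>k. gap a k / real (P a (J a k))) ` {1..K0}"
  define c where "c = Min S"
  have Pp: "0 < real (P a (J a k))" if "1 \<le> k" for k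
  proof -
    have "1 \<le> J a k" using J_spec[OF a that] by simp
    then have "1 \<le> P a (J a k)" using P_pos by blast
    then show ?thesis by simp
  qed
  have finS: "finite S" "S \<noteq> {}" unfolding S_def using K0 by auto
  have cpos: "c > 0" unfolding c_def
  proof (subst Min_gr_iff[OF finS])
    show "\<forall>x\<in>S. 0 < x" unfolding S_def using gap_pos[OF a _ irr] Pp by auto
  qed
  have main: "1 \<le> k \<longrightarrow> c * real (P a (J a k)) \<le> gap a k" for k
  proof (induction k rule: less_induct)
    case (less k)
    show ?case
    proof
      assume k1: "1 \<le> k"
      show "c * real (P a (J a k)) \<le> gap a k"
      proof (cases "k \<le> K0")
        case True
        then have "gap a k / real (P a (J a k)) \<in> S" unfolding S_def using k1 by auto
        then have "c \<le> gap a k / real (P a (J a k))" unfolding c_def using finS by simp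
        then show ?thesis using Pp[OF k1] by (simp add: field_simps)
      next
        case False
        then obtain k' where k': "k = Suc k'" "K0 \<le> k'" by (cases k) auto
        have k'1: "1 \<le> k'" using k' K0 by simp
        have r: "J a (Suc k') = Suc (J a k')" using K0 k' by simp
        have js: "1 \<le> J a k'" "J a k' \<le> k'" using J_spec[OF a k'1] by auto
        have g: "gap a k = gap a k' + gap a (J a k')" using gap_rec[OF a k'1 r] k' by simp
        have ih1: "c * real (P a (J a k')) \<le> gap a k'" using less.IH[of k'] k' k'1 by simp
        have ih2: "c * real (P a (J a (J a k'))) \<le> gap a (J a k')"
          using less.IH[of "J a k'"] k' js by simp
        have rp: "P a (J a k) = P a (J a k') + P a (J a (J a k'))"
          using P_rec'[OF a js(1)] r k' by simp
        show ?thesis using g ih1 ih2 rp by (simp add: distrib_left)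
      qed
    qed
  qed
  show ?thesis using cpos main by blast
qed

theorem mainTheorem8:
  fixes a :: real
  assumes "cutoff a"
  shows "a \<in> \<rat>"
proof (rule ccontr)
  assume irr: "a \<notin> \<rat>"
  have a: "1 \<le> a" and cut: "\<forall>b. 1 \<le> b \<and> b < a \<longrightarrow> P a \<noteq> P b"
    using assms unfolding cutoff_def by auto
  have a1: "a \<noteq> 1" using irr by auto
  obtain c where c: "c > 0" "\<forall>k\<ge>1. c * real (P a (J a k)) \<le> gap a k"
    using gap_lower[OF a irr] by blast
  define b where "b = max 1 (a - c)"
  have b1: "1 \<le> b" and ba: "b < a" and bac: "a - c \<le> b" using a a1 c(1) by (auto simp: b_def)
  have eqn: "P b n = P a n" for n
  proof (induction n rule: less_induct)
    case (less n)
    show ?case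
    proof (cases n)
      case 0 then show ?thesis by (simp add: P0)
    next
      case (Suc m)
      show ?thesis
      proof (cases m)
        case 0 then show ?thesis using Suc P1[of a] P1[of b] by simp
      next
        case (Suc k)
        have m1: "1 \<le> Suc k" by simp
        let ?j = "J a (Suc k)"
        have sj: "1 \<le> ?j" "?j \<le> Suc k" "a * real (P a (?j - 1)) < real (P a (Suc k))"
          "real (P a (Suc k)) \<le> a * real (P a ?j)" using J_spec[OF a m1] by auto
        have IH: "P b i = P a i" if "i \<le> Suc k" for i
          using less.IH[of i] that \<open>n = Suc m\<close> Suc by simp
        have gk: "c * real (P a ?j) \<le> a * real (P a ?j) - real (P a (Suc k))"
          using c(2)[rule_format, OF m1] unfolding gap_def .
        have "b * real (P a (?j - 1)) \<le> a * real (P a (?j - 1))"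
          using ba by (simp add: mult_right_mono)
        then have q3: "b * real (P a (?j - 1)) < real (P a (Suc k))" using sj(3) by linarith
        have "(a - c) * real (P a ?j) \<le> b * real (P a ?j)" using bac by (simp add: mult_right_mono)
        then have q4: "real (P a (Suc k)) \<le> b * real (P a ?j)" using gk by (simp add: algebra_simps)
        define Qb where "Qb = (\<lambda>j. 1 \<le> j \<and> j \<le> Suc k \<and> b * real (P b (j - 1)) < real (P b (Suc k))
              \<and> real (P b (Suc k)) \<le> b * real (P b j))"
        have e1: "P b ?j = P a ?j" using IH sj(2) by blast
        have e2: "P b (?j - 1) = P a (?j - 1)" using IH sj(2) by simp
        have e3: "P b (Suc k) = P a (Suc k)" using IH by simp
        have Qj: "Qb ?j" unfolding Qb_def e1 e2 e3 using sj(1,2) q3 q4 by blast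
        have uq: "x = ?j" if "Qb x" for x
        proof -
          have x: "1 \<le> x" "x \<le> Suc k" "b * real (P b (x - 1)) < real (P b (Suc k))"
              "real (P b (Suc k)) \<le> b * real (P b x)" using that unfolding Qb_def by auto
          have f1: "P b x = P a x" using IH x(2) by blast
          have f2: "P b (x - 1) = P a (x - 1)" using IH x(2) by simp
          have x': "b * real (P a (x - 1)) < real (P a (Suc k))"
              "real (P a (Suc k)) \<le> b * real (P a x)" using x(3,4) unfolding f1 f2 e3 by auto
          have b0: "0 \<le> b" using b1 by simp
          show "x = ?j" by (rule pred_unique[OF P_mono[of a] b0 x(1) x'(1) x'(2) sj(1) q3 q4])
        qed
        have "(THE j. Qb j) = ?j" using Qj uq by (rule the_equality)
        then have Jb: "J b (Suc k) = ?j" unfolding J_def Qb_def .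
        have "P b n = P b (Suc k) + P b ?j" using P_rec[OF b1, of k] Jb \<open>n = Suc m\<close> Suc by simp
        also have "\<dots> = P a (Suc k) + P a ?j" using IH[of ?j] IH[of "Suc k"] sj(2) by simp
        also have "\<dots> = P a n" using P_rec[OF a, of k] \<open>n = Suc m\<close> Suc by simp
        finally show ?thesis .
      qed
    qed
  qed
  then have "P b = P a" by auto
  then show False using cut b1 ba by auto
qed

end
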